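(* Consider Algorithm MWHVC (described in the context) run on a hypergraph $G=(V,E)$ of rank $f$ with vertex weights $w$, with parameters $\varepsilon\in(0,1]$, $\beta=\varepsilon/(f+\varepsilon)$ and multiplier $\alpha>1$. For every iteration $i\ge 0$ and every vertex $v\notin C$ (at iteration $i$), we have $\sum_{e\in E'(v)} \mathrm{deal}_i(e)\le \beta\cdot w(v)$, where $E'(v)$ is the set of hyperedges containing $v$ that are still uncovered in iteration $i$.
   Context: Let $G=(V,E)$ be a hypergraph: each hyperedge is a nonempty subset of $V$ of size at most $f$ (rank $f$). Vertices have nonnegative weights $w(v)$. For $v\in V$, $E(v)=\{e\in E: v\in e\}$; $\Delta=\max_v |E(v)|\ge 3$. A hyperedge $e$ is covered by $C\subseteq V$ if $e\cap C\neq\emptyset$. The computation is distributed in synchronous rounds on the bipartite network with node set $V\cup E$ and a link between $v$ and $e$ iff $v\in e$. Parameters: $\varepsilon\in(0,1]$, $\beta=\varepsilon/(f+\varepsilon)$, and a multiplier $\alpha>1$. Algorithm MWHVC: Initialize $C\gets\emptyset$ and $E'(v)\gets E(v)$ for every $v$. Iteration $0$: every hyperedge $e$ sets $\mathrm{deal}_0(e)=\beta\cdot\min_{v\in e} w(v)/|E(v)|$ and $\delta_0(e)=\mathrm{deal}_0(e)$. For $i=1,2,\dots$: (a) every vertex $v\notin C$ (not terminated) checks whether $\sum_{e\in E(v)}\delta_{i-1}(e)\ge(1-\beta)w(v)$; if so, $v$ joins $C$, tells every $e\in E'(v)$ that $e$ is covered, and terminates. (b) Every uncovered hyperedge that receives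 such a message becomes covered, informs all its vertices, and terminates. (c) Every vertex $v\notin C$ that is told $e$ is covered sets $E'(v)\gets E'(v)\setminus\{e\}$; if $E'(v)=\emptyset$, $v$ terminates without joining $C$. (d) Every vertex $v\notin C$ sends "raise" to all $e\in E'(v)$ if $\sum_{e\in E'(v)}\mathrm{deal}_{i-1}(e)\le(\beta/\alpha)w(v)$, and otherwise sends "stuck" to all $e\in E'(v)$. (e) Every uncovered hyperedge $e$ sets $\mathrm{deal}_i(e)=\mathrm{deal}_{i-1}(e)$ if it received some "stuck" message, and $\mathrm{deal}_i(e)=\alpha\cdot\mathrm{deal}_{i-1}(e)$ otherwise, and $\delta_i(e)=\delta_{i-1}(e)+\mathrm{deal}_i(e)$. If $e$ becomes covered in iteration $j$, then by convention $\delta_i(e)=\delta_{j-1}(e)$ for all $i\ge j$. *)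

theory Defs
  imports Complex_Main
begin

text \<open>State of algorithm MWHVC at the end of an iteration:
  the cover C, the set of covered hyperedges, the set of vertices that terminated
  without joining C, and the current values deal and delta of every hyperedge.\<close>

record 'v mwstate =
  inC   :: "'v set"
  cov   :: "'v set set"
  termd :: "'v set"
  deal  :: "'v set \<Rightarrow> real"
  delta :: "'v set \<Rightarrow> real"

definition Ev :: "'v set set \<Rightarrow> 'v \<Rightarrow> 'v set set" where
  "Ev E v = {e \<in> E. v \<in> e}"

definition Eprime :: "'v set set \<Rightarrow> 'v mwstate \<Rightarrow> 'v \<Rightarrow> 'v set set" where
  "Eprime E s v = {e \<in> Ev E v. e \<notin> cov s}"

definition mw_init ::
  "'v set set \<Rightarrow> ('v \<Rightarrow> real) \<Rightarrow> real \<Rightarrow> 'v mwstate" where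
  "mw_init E w \<beta> =
     (let d = (\<lambda>e. \<beta> * Min ((\<lambda>u. w u / real (card (Ev E u))) ` e))
      in \<lparr> inC = {}, cov = {}, termd = {}, deal = d, delta = d \<rparr>)"

definition mw_step ::
  "'v set \<Rightarrow> 'v set set \<Rightarrow> ('v \<Rightarrow> real) \<Rightarrow> real \<Rightarrow> real \<Rightarrow> 'v mwstate \<Rightarrow> 'v mwstate" where
  "mw_step V E w \<beta> \<alpha> s =
     (let
        \<comment> \<open>(a) active vertices whose check succeeds join C\<close>
        J = {v \<in> V. v \<notin> inC s \<and> v \<notin> termd s \<and>
                    (\<Sum>e\<in>Ev E v. delta s e) \<ge> (1 - \<beta>) * w v};
        \<comment> \<open>(b) uncovered hyperedges receiving a message become covered\<close>
        newcov = {e \<in> E. e \<notin> cov s \<and> (\<exists>v\<in>J. v \<in> e)};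
        cov' = cov s \<union> newcov;
        C' = inC s \<union> J;
        \<comment> \<open>(c) vertices told of coverage update E'(v) and may terminate\<close>
        termd' = termd s \<union> {v \<in> V. v \<notin> C' \<and> (\<exists>e\<in>newcov. v \<in> e) \<and>
                                   {e \<in> Ev E v. e \<notin> cov'} = {}};
        active = (\<lambda>v. v \<in> V \<and> v \<notin> C' \<and> v \<notin> termd');
        \<comment> \<open>(d) raise / stuck\<close>
        raise = (\<lambda>v. (\<Sum>e\<in>{e \<in> Ev E v. e \<notin> cov'}. deal s e) \<le> (\<beta> / \<alpha>) * w v);
        \<comment> \<open>(e) update of deal and delta for uncovered hyperedges\<close>
        deal' = (\<lambda>e. if e \<in> E \<and> e \<notin> cov' then
                        (if (\<exists>v\<in>e. active v \<and> \<not> raise v) then deal s e else \<alpha> * deal s e)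
                      else deal s e);
        delta' = (\<lambda>e. if e \<in> E \<and> e \<notin> cov' then delta s e + deal' e else delta s e)
      in \<lparr> inC = C', cov = cov', termd = termd', deal = deal', delta = delta' \<rparr>)"

primrec mwhvc ::
  "'v set \<Rightarrow> 'v set set \<Rightarrow> ('v \<Rightarrow> real) \<Rightarrow> real \<Rightarrow> real \<Rightarrow> nat \<Rightarrow> 'v mwstate" where
  "mwhvc V E w \<beta> \<alpha> 0 = mw_init E w \<beta>"
| "mwhvc V E w \<beta> \<alpha> (Suc i) = mw_step V E w \<beta> \<alpha> (mwhvc V E w \<beta> \<alpha> i)"

end

theory Submission
  imports Defs
begin

lemma step_facts:
  fixes s :: "'v mwstate" and V E w and \<beta> \<alpha> :: real
  defines "s' \<equiv> mw_step V E w \<beta> \<alpha> s"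
  shows "cov s \<subseteq> cov s'" "inC s \<subseteq> inC s'"
    "\<And>v. v \<in> termd s' \<Longrightarrow> v \<in> termd s \<or> Eprime E s' v = {}"
    "\<And>e. deal s' e = (if e \<in> E \<and> e \<notin> cov s' then
        (if (\<exists>u\<in>e. u \<in> V \<and> u \<notin> inC s' \<and> u \<notin> termd s' \<and>
              \<not> (\<Sum>e\<in>Eprime E s' u. deal s e) \<le> (\<beta> / \<alpha>) * w u) then deal s e else \<alpha> * deal s e)
        else deal s e)"
  unfolding s'_def mw_step_def Let_def Eprime_def by auto

lemma Eprime_mono: "cov s \<subseteq> cov s' \<Longrightarrow> Eprime E s' v \<subseteq> Eprime E s v"
  unfolding Eprime_def by auto

definition inv where
  "inv V E w \<beta> s \<longleftrightarrow> (\<forall>e\<in>E. deal s e \<ge> 0) \<and> (\<forall>v\<in>termd s. Eprime E s v = {}) \<and>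
     (\<forall>v\<in>V. v \<notin> inC s \<longrightarrow> (\<Sum>e\<in>Eprime E s v. deal s e) \<le> \<beta> * w v)"

lemma inv_step:
  assumes I: "inv V E w \<beta> s" and fin: "finite E" and b: "\<beta> \<ge> 0" and a: "\<alpha> > 1"
    and wpos: "\<forall>v\<in>V. w v \<ge> 0"
  shows "inv V E w \<beta> (mw_step V E w \<beta> \<alpha> s)"
proof -
  define s' where "s' = mw_step V E w \<beta> \<alpha> s"
  note F = step_facts[where s=s and V=V and E=E and w=w and \<beta>=\<beta> and \<alpha>=\<alpha>, folded s'_def]
  have d0: "\<forall>e\<in>E. deal s e \<ge> 0" and t0: "\<forall>v\<in>termd s. Eprime E s v = {}"
    and m0: "\<forall>v\<in>V. v \<notin> inC s \<longrightarrow> (\<Sum>e\<in>Eprime E s v. deal s e) \<le> \<beta> * w v"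
    using I unfolding inv_def by auto
  have EP: "\<And>v. Eprime E s' v \<subseteq> Eprime E s v" using Eprime_mono[OF F(1)] .
  have EPE: "\<And>v s. Eprime E s v \<subseteq> E" unfolding Eprime_def Ev_def by auto
  have finEP: "\<And>v s. finite (Eprime E s v)" using EPE fin finite_subset by blast
  have d1: "\<forall>e\<in>E. deal s' e \<ge> 0"
    using d0 a mult_right_mono[of 1 \<alpha>] by (auto simp: F(4))
  have t1: "\<forall>v\<in>termd s'. Eprime E s' v = {}"
    using F(3) t0 EP by blast
  have m1: "(\<Sum>e\<in>Eprime E s' v. deal s' e) \<le> \<beta> * w v" if v: "v \<in> V" "v \<notin> inC s'" for v
  proof -
    have vs: "v \<notin> inC s" using v F(2) by auto
    have sumle: "(\<Sum>e\<in>Eprime E s' v. deal s e) \<le> (\<Sum>e\<in>Eprime E s v. deal s e)"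
      by (rule sum_mono2[OF finEP EP]) (use d0 EPE in blast)
    show ?thesis
    proof (cases "v \<in> termd s'")
      case True
      then show ?thesis using t1 wpos v b by simp
    next
      case nt: False
      show ?thesis
      proof (cases "(\<Sum>e\<in>Eprime E s' v. deal s e) \<le> (\<beta> / \<alpha>) * w v")
        case True
        have "(\<Sum>e\<in>Eprime E s' v. deal s' e) \<le> (\<Sum>e\<in>Eprime E s' v. \<alpha> * deal s e)"
        proof (rule sum_mono)
          fix e assume e: "e \<in> Eprime E s' v"
          then have "e \<in> E" using EPE by blast
          have "deal s e \<le> \<alpha> * deal s e" using mult_right_mono[of 1 \<alpha> "deal s e"] d0 a \<open>e \<in> E\<close> by simp
          then show "deal s' e \<le> \<alpha> * deal s e" using d0 a by (auto simp: F(4))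
        qed
        also have "\<dots> = \<alpha> * (\<Sum>e\<in>Eprime E s' v. deal s e)" by (simp add: sum_distrib_left)
        also have "\<dots> \<le> \<alpha> * ((\<beta> / \<alpha>) * w v)" using True a by (intro mult_left_mono) auto
        also have "\<dots> = \<beta> * w v" using a by simp
        finally show ?thesis .
      next
        case False
        have "(\<Sum>e\<in>Eprime E s' v. deal s' e) = (\<Sum>e\<in>Eprime E s' v. deal s e)"
        proof (rule sum.cong[OF refl])
          fix e assume e: "e \<in> Eprime E s' v"
          then have "e \<in> E" "e \<notin> cov s'" "v \<in> e" unfolding Eprime_def Ev_def by auto
          then show "deal s' e = deal s e" using v nt False by (auto simp: F(4))
        qed
        then show ?thesis using sumle m0 v vs by force
      qed
    qed
  qed
  show ?thesis unfolding inv_def s'_def[symmetric] using d1 t1 m1 by blast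
qed

lemma inv_init:
  assumes fin: "finite E" and "finite V" and he: "\<forall>e\<in>E. e \<noteq> {} \<and> e \<subseteq> V"
    and wpos: "\<forall>v\<in>V. w v \<ge> 0" and b: "\<beta> \<ge> 0"
  shows "inv V E w \<beta> (mw_init E w \<beta>)"
proof -
  define d where "d = (\<lambda>e. \<beta> * Min ((\<lambda>u. w u / real (card (Ev E u))) ` e))"
  have s: "mw_init E w \<beta> = \<lparr> inC = {}, cov = {}, termd = {}, deal = d, delta = d \<rparr>"
    unfolding mw_init_def d_def Let_def by simp
  have fe: "\<And>e. e \<in> E \<Longrightarrow> finite e" using he \<open>finite V\<close> finite_subset by blast
  have d0: "d e \<ge> 0" if e: "e \<in> E" for e
  proof -
    have "Min ((\<lambda>u. w u / real (card (Ev E u))) ` e) \<ge> 0"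
      using fe[OF e] he e wpos by (subst Min_ge_iff) (auto, meson divide_nonneg_nonneg of_nat_0_le_iff subsetD)
    then show ?thesis unfolding d_def using b by simp
  qed
  have m: "(\<Sum>e\<in>Ev E v. d e) \<le> \<beta> * w v" if v: "v \<in> V" for v
  proof -
    have "(\<Sum>e\<in>Ev E v. d e) \<le> (\<Sum>e\<in>Ev E v. \<beta> * (w v / real (card (Ev E v))))"
    proof (rule sum_mono)
      fix e assume e: "e \<in> Ev E v"
      then have eE: "e \<in> E" "v \<in> e" unfolding Ev_def by auto
      have "Min ((\<lambda>u. w u / real (card (Ev E u))) ` e) \<le> w v / real (card (Ev E v))"
        using fe[OF eE(1)] eE by (intro Min_le) auto
      then show "d e \<le> \<beta> * (w v / real (card (Ev E v)))" unfolding d_def using b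
        by (rule mult_left_mono)
    qed
    also have "\<dots> = \<beta> * w v * (real (card (Ev E v)) / real (card (Ev E v)))" by simp
    also have "\<dots> \<le> \<beta> * w v"
      using b wpos v by (cases "card (Ev E v) = 0") auto
    finally show ?thesis .
  qed
  show ?thesis unfolding inv_def s using d0 m by (simp add: Eprime_def)
qed

theorem mainTheorem1:
  fixes V :: "'v set" and E :: "'v set set" and w :: "'v \<Rightarrow> real"
    and f :: nat and \<epsilon> \<alpha> \<beta> :: real
  assumes "finite V" and "finite E"
    and "\<forall>e\<in>E. e \<noteq> {} \<and> e \<subseteq> V \<and> card e \<le> f"
    and "\<forall>v\<in>V. w v \<ge> 0"
    and "Max ((\<lambda>v. card (Ev E v)) ` V) \<ge> 3"
    and "0 < \<epsilon>" and "\<epsilon> \<le> 1"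
    and "\<beta> = \<epsilon> / (real f + \<epsilon>)"
    and "\<alpha> > 1"
  shows "\<forall>i. \<forall>v\<in>V. v \<notin> inC (mwhvc V E w \<beta> \<alpha> i) \<longrightarrow>
           (\<Sum>e\<in>Eprime E (mwhvc V E w \<beta> \<alpha> i) v. deal (mwhvc V E w \<beta> \<alpha> i) e) \<le> \<beta> * w v"
proof -
  have b: "\<beta> \<ge> 0" using assms(6,8) by simp
  have "inv V E w \<beta> (mwhvc V E w \<beta> \<alpha> i)" for i
  proof (induction i)
    case 0
    then show ?case using inv_init[OF assms(2,1) _ assms(4) b] assms(3) by simp
  next
    case (Suc i)
    then show ?case using inv_step[OF _ assms(2) b assms(9) assms(4)] by simp
  qed
  then show ?thesis unfolding inv_def by blast
qed

end
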